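(* Let $K\subseteq\mathbb{R}^n$ be a proper cone and let $A\in\mathbb{R}^{n\times n}$ be $K$-monotone. Let $A=U-V$ be a $K$-regular splitting and let $U=F-G$ be a $K$-weak regular splitting of type II such that $VF^{-1}G=GF^{-1}V$. Fix a positive integer $s$, let $P_s$ be the matrix with $P_s^{-1}=\sum_{j=0}^{s-1}(F^{-1}G)^{j}F^{-1}$, and let $\widehat{T}_{s}=(GF^{-1})^{s}+\sum_{j=0}^{s-1}(GF^{-1})^{j}VF^{-1}$. If $G\geq_K GF^{-1}G$, then the induced splitting $A=P_s-\widehat{T}_sP_s$ is a $K$-regular splitting.
   Context: A proper cone $K\subseteq\mathbb{R}^n$ is a closed, convex, pointed, solid cone. For $M\in\mathbb{R}^{n\times n}$, $M\geq_K 0$ means $MK\subseteq K$, and $M\geq_K N$ means $M-N\geq_K0$. A matrix $A$ is $K$-monotone if $A$ is nonsingular and $A^{-1}\geq_K 0$. A splitting $A=U-V$ (with $U$ nonsingular) is $K$-regular if $U^{-1}\geq_K 0$ and $V\geq_K 0$; it is a $K$-weak regular splitting of type II if $U^{-1}\geq_K 0$ and $VU^{-1}\geq_K 0$. *)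

theory Defs
  imports "HOL-Analysis.Analysis"
begin

definition proper_cone :: "(real^'n) set \<Rightarrow> bool" where
  "proper_cone K \<longleftrightarrow> cone K \<and> closed K \<and> convex K
     \<and> K \<inter> uminus ` K = {0} \<and> interior K \<noteq> {}"

definition K_nonneg :: "(real^'n) set \<Rightarrow> real^'n^'n \<Rightarrow> bool" where
  "K_nonneg K M \<longleftrightarrow> (\<forall>x\<in>K. M *v x \<in> K)"

definition K_monotone :: "(real^'n) set \<Rightarrow> real^'n^'n \<Rightarrow> bool" where
  "K_monotone K A \<longleftrightarrow> invertible A \<and> K_nonneg K (matrix_inv A)"

definition K_regular_splitting ::
  "(real^'n) set \<Rightarrow> real^'n^'n \<Rightarrow> real^'n^'n \<Rightarrow> real^'n^'n \<Rightarrow> bool" where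
  "K_regular_splitting K A U V \<longleftrightarrow> A = U - V \<and> invertible U
     \<and> K_nonneg K (matrix_inv U) \<and> K_nonneg K V"

definition K_weak_regular_splitting_II ::
  "(real^'n) set \<Rightarrow> real^'n^'n \<Rightarrow> real^'n^'n \<Rightarrow> real^'n^'n \<Rightarrow> bool" where
  "K_weak_regular_splitting_II K A U V \<longleftrightarrow> A = U - V \<and> invertible U
     \<and> K_nonneg K (matrix_inv U) \<and> K_nonneg K (V ** matrix_inv U)"

fun matpow :: "real^'n^'n \<Rightarrow> nat \<Rightarrow> real^'n^'n" where
  "matpow M 0 = mat 1"
| "matpow M (Suc k) = M ** matpow M k"

end

theory Submission
  imports Defs
begin

lemma mm_radd: "((A::real^'n^'n) + B) ** C = A ** C + B ** C"
  by (simp add: matrix_eq matrix_vector_mul_assoc[symmetric] algebra_simps)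
lemma mm_rsub: "((A::real^'n^'n) - B) ** C = A ** C - B ** C"
  by (simp add: matrix_eq matrix_vector_mul_assoc[symmetric] algebra_simps)
lemma mm_lsub: "(A::real^'n^'n) ** (B - C) = A ** B - A ** C"
  by (simp add: matrix_eq matrix_vector_mul_assoc[symmetric] algebra_simps)
lemma mm_ladd: "(A::real^'n^'n) ** (B + C) = A ** B + A ** C"
  by (rule matrix_add_ldistrib)

lemma mm_lsum: "(A::real^'n^'n) ** sum f S = sum (\<lambda>i. A ** f i) S"
  by (induction S rule: infinite_finite_induct) (auto simp: mm_ladd)
lemma mm_rsum: "sum (f::_ \<Rightarrow> real^'n^'n) S ** (A::real^'n^'n) = sum (\<lambda>i. f i ** A) S"
proof (induction S rule: infinite_finite_induct)
  case (insert x F)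
  then show ?case using mm_radd[of "f x" "sum f F" A] by simp
qed auto
lemma mv_sum: "sum f S *v (x::real^'n) = sum (\<lambda>i. f i *v x) S"
  by (induction S rule: infinite_finite_induct) (auto simp: matrix_vector_mult_add_rdistrib)

lemma minv_props:
  assumes "invertible (A::real^'n^'n)"
  shows "A ** matrix_inv A = mat 1" "matrix_inv A ** A = mat 1"
proof -
  have "\<exists>A'. A ** A' = mat 1 \<and> A' ** A = mat 1" using assms invertible_def by blast
  then have "A ** matrix_inv A = mat 1 \<and> matrix_inv A ** A = mat 1"
    unfolding matrix_inv_def by (rule someI_ex)
  then show "A ** matrix_inv A = mat 1" "matrix_inv A ** A = mat 1" by auto
qed

lemma minv_unique:
  assumes "(A::real^'n^'n) ** B = mat 1"
  shows "matrix_inv A = B" "invertible A"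
proof -
  have BA: "B ** A = mat 1" using assms matrix_left_right_inverse by blast
  show inv: "invertible A" using assms BA invertible_def by blast
  have "matrix_inv A = matrix_inv A ** (A ** B)" by (simp add: assms)
  also have "\<dots> = B" by (simp add: matrix_mul_assoc minv_props(2)[OF inv])
  finally show "matrix_inv A = B" .
qed

lemma matpow_add: "matpow M (m + n) = matpow M m ** matpow M n"
  by (induction m) (auto simp: matrix_mul_assoc)

lemma matpow_comm: "M ** matpow M n = matpow M n ** M"
  by (induction n) (auto, metis matrix_mul_assoc)

lemma matpow_comm_gen: "(M::real^'n^'n) ** X = X ** M \<Longrightarrow> matpow M n ** X = X ** matpow M n"
  by (induction n) (auto simp: matrix_mul_assoc, metis matrix_mul_assoc)

lemma matpow_mult: "matpow (matpow M s) k = matpow M (s * k)"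
  by (induction k) (auto simp: matpow_add[symmetric])

lemma comm_inv:
  assumes "invertible (M::real^'n^'n)" "M ** X = X ** M"
  shows "matrix_inv M ** X = X ** matrix_inv M"
proof -
  have "matrix_inv M ** X = matrix_inv M ** X ** (M ** matrix_inv M)"
    by (simp add: minv_props[OF assms(1)])
  also have "\<dots> = matrix_inv M ** (X ** M) ** matrix_inv M" by (simp add: matrix_mul_assoc)
  also have "\<dots> = matrix_inv M ** (M ** X) ** matrix_inv M" by (simp add: assms(2))
  also have "\<dots> = X ** matrix_inv M" by (simp add: matrix_mul_assoc minv_props[OF assms(1)])
  finally show ?thesis .
qed

lemma pc_zero: "proper_cone K \<Longrightarrow> 0 \<in> K"
  unfolding proper_cone_def by auto

lemma pc_scale: "proper_cone K \<Longrightarrow> x \<in> K \<Longrightarrow> c \<ge> 0 \<Longrightarrow> c *\<^sub>R x \<in> K"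
  unfolding proper_cone_def cone_def by auto

lemma pc_add:
  assumes "proper_cone K" "x \<in> K" "y \<in> K"
  shows "x + y \<in> K"
proof -
  have "convex K" using assms(1) unfolding proper_cone_def by auto
  then have "(1/2::real) *\<^sub>R x + (1/2::real) *\<^sub>R y \<in> K"
    using assms unfolding convex_def by auto
  then have "(2::real) *\<^sub>R ((1/2::real) *\<^sub>R x + (1/2::real) *\<^sub>R y) \<in> K"
    using pc_scale[OF assms(1)] by auto
  then show ?thesis by (simp add: scaleR_add_right)
qed

lemma pc_sum:
  assumes "proper_cone K" "\<And>i. i \<in> S \<Longrightarrow> f i \<in> K"
  shows "sum f S \<in> K"
  using assms(2)
  by (induction S rule: infinite_finite_induct) (auto simp: pc_zero[OF assms(1)] pc_add[OF assms(1)])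

lemma Kn_mult: "K_nonneg K A \<Longrightarrow> K_nonneg K B \<Longrightarrow> K_nonneg K (A ** B)"
  unfolding K_nonneg_def by (simp add: matrix_vector_mul_assoc[symmetric])

lemma Kn_id: "K_nonneg K (mat 1)"
  unfolding K_nonneg_def by simp

lemma Kn_pow: "K_nonneg K M \<Longrightarrow> K_nonneg K (matpow M n)"
  by (induction n) (auto simp: Kn_id Kn_mult)

lemma Kn_add: "proper_cone K \<Longrightarrow> K_nonneg K A \<Longrightarrow> K_nonneg K B \<Longrightarrow> K_nonneg K (A + B)"
  unfolding K_nonneg_def by (simp add: matrix_vector_mult_add_rdistrib pc_add)

lemma Kn_sum: "proper_cone K \<Longrightarrow> (\<And>i. i \<in> S \<Longrightarrow> K_nonneg K (f i)) \<Longrightarrow> K_nonneg K (sum f S)"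
  unfolding K_nonneg_def by (simp add: mv_sum pc_sum)


subsection \<open>A strictly positive functional\<close>

lemma pc_functional:
  fixes K :: "(real^'n) set"
  assumes pc: "proper_cone K"
  shows "\<exists>a. \<forall>c\<in>K. norm c \<le> a \<bullet> c"
proof -
  define T where "T = K \<inter> sphere 0 1"
  define C where "C = convex hull T"
  have clK: "closed K" using pc unfolding proper_cone_def by auto
  have "compact T" unfolding T_def using compact_Int_closed[OF compact_sphere clK, of 0 1]
    by (simp add: Int_commute)
  then have "compact C" unfolding C_def by (rule compact_convex_hull)
  then have clC: "closed C" by (rule compact_imp_closed)
  have cvC: "convex C" unfolding C_def by simp
  have n0: "0 \<notin> C"
  proof
    assume "0 \<in> C"
    then obtain S u where S: "finite S" "S \<subseteq> T" "\<forall>x\<in>S. 0 \<le> u x" "sum u S = 1"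
      "sum (\<lambda>v. u v *\<^sub>R v) S = 0"
      unfolding C_def convex_hull_explicit by auto
    obtain v0 where v0: "v0 \<in> S" "u v0 > 0"
    proof (rule ccontr)
      assume "\<not> thesis"
      then have "\<forall>v\<in>S. u v = 0" using S(3) that by force
      then have "sum u S = 0" by simp
      then show False using S(4) by simp
    qed
    have rest: "sum (\<lambda>v. u v *\<^sub>R v) (S - {v0}) \<in> K"
      by (rule pc_sum[OF pc]) (use S in \<open>auto simp: T_def intro!: pc_scale[OF pc]\<close>)
    have "sum (\<lambda>v. u v *\<^sub>R v) S = u v0 *\<^sub>R v0 + sum (\<lambda>v. u v *\<^sub>R v) (S - {v0})"
      using S(1) v0(1) by (simp add: sum.remove)
    then have "- (u v0 *\<^sub>R v0) \<in> K" using rest S(5)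
      by (metis add.inverse_inverse add_eq_0_iff)
    then have m: "- v0 \<in> K" using pc_scale[OF pc _, of "- (u v0 *\<^sub>R v0)" "1 / u v0"] v0(2) by simp
    have vK: "v0 \<in> K" "norm v0 = 1" using S(2) v0(1) unfolding T_def by auto
    have "v0 \<in> K \<inter> uminus ` K" using m vK(1) by (metis IntI add.inverse_inverse image_eqI)
    then have "v0 = 0" using pc unfolding proper_cone_def by auto
    then show False using vK(2) by simp
  qed
  obtain a b where ab: "a \<noteq> 0" "0 < b" "\<forall>x\<in>C. a \<bullet> x > b"
    using separating_hyperplane_closed_0[OF cvC clC n0] by blast
  have "\<forall>c\<in>K. norm c \<le> ((1/b) *\<^sub>R a) \<bullet> c"
  proof
    fix c assume c: "c \<in> K"
    show "norm c \<le> ((1/b) *\<^sub>R a) \<bullet> c"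
    proof (cases "c = 0")
      case True then show ?thesis by simp
    next
      case False
      have "(1 / norm c) *\<^sub>R c \<in> T" unfolding T_def using c False pc_scale[OF pc c]
        by (simp add: norm_divide)
      then have "(1 / norm c) *\<^sub>R c \<in> C" unfolding C_def by (meson hull_subset subsetD)
      then have "a \<bullet> ((1 / norm c) *\<^sub>R c) > b" using ab by auto
      then have "(a \<bullet> c) / norm c > b" by (simp add: inner_scaleR_right divide_inverse mult.commute)
      then have "a \<bullet> c > b * norm c" using False by (simp add: pos_less_divide_eq)
      then show ?thesis using ab(2) by (simp add: inner_scaleR_left field_simps)
    qed
  qed
  then show ?thesis by blast
qed

subsection \<open>Neumann series in a cone\<close>

lemma neumann:
  fixes R :: "real^'n^'n"
  assumes pc: "proper_cone K" and Rn: "K_nonneg K R"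
    and sm: "\<And>y. y \<in> K \<Longrightarrow> summable (\<lambda>k. norm (matpow R k *v y))"
  shows "invertible (mat 1 - R) \<and> K_nonneg K (matrix_inv (mat 1 - R))"
proof -
  have key: "\<exists>z\<in>K. (mat 1 - R) *v z = y" if y: "y \<in> K" for y
  proof -
    define f where "f = (\<lambda>k. matpow R k *v y)"
    have "summable (\<lambda>k. norm (f k))" unfolding f_def by (rule sm[OF y])
    then have s: "summable f" by (rule summable_norm_cancel)
    define z where "z = suminf f"
    have fs: "f sums z" unfolding z_def by (rule summable_sums[OF s])
    have fK: "f k \<in> K" for k
    proof -
      have "K_nonneg K (matpow R k)" by (rule Kn_pow[OF Rn])
      then show ?thesis unfolding K_nonneg_def f_def using y by blast
    qed
    have clK: "closed K" using pc unfolding proper_cone_def by blast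
    have psK: "sum f {..<n} \<in> K" for n by (rule pc_sum[OF pc], rule fK)
    have "z \<in> K"
      by (rule closed_sequentially[OF clK psK fs[unfolded sums_def]])
    have s1: "(\<lambda>k. (mat 1 - R) *v f k) sums ((mat 1 - R) *v z)"
      using bounded_linear.sums[OF matrix_vector_mul_bounded_linear fs] .
    have fsuc: "f (Suc k) = R *v f k" for k unfolding f_def by (simp add: matrix_vector_mul_assoc)
    have "(\<lambda>n. f (Suc n) - f n) sums (0 - f 0)"
      by (rule telescope_sums[OF summable_LIMSEQ_zero[OF s]])
    then have "(\<lambda>n. - (f (Suc n) - f n)) sums (- (0 - f 0))" by (rule sums_minus)
    moreover have "(\<lambda>n. - (f (Suc n) - f n)) = (\<lambda>k. (mat 1 - R) *v f k)"
      by (rule ext) (simp add: fsuc matrix_vector_mult_diff_rdistrib)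
    moreover have "- (0 - f 0) = y" unfolding f_def by simp
    ultimately have "(\<lambda>k. (mat 1 - R) *v f k) sums y" by simp
    then have "(mat 1 - R) *v z = y" using s1 sums_unique2 by blast
    then show ?thesis using \<open>z \<in> K\<close> by blast
  qed
  have surj: "\<exists>w. (mat 1 - R) *v w = x" for x
  proof -
    have "interior K \<noteq> {}" using pc unfolding proper_cone_def by auto
    then obtain e where "e \<in> interior K" by blast
    then obtain r where r: "r > 0" "ball e r \<subseteq> K" using mem_interior by blast
    define t where "t = r / (2 * (norm x + 1))"
    have "0 < 2 * (norm x + 1)" by (smt (verit) norm_ge_zero)
    then have t: "t > 0" unfolding t_def using divide_pos_pos r(1) by blast
    have "norm (t *\<^sub>R x) < r"
    proof -
      have "norm (t *\<^sub>R x) = t * norm x" using t by simp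
      also have "\<dots> < t * (2 * (norm x + 1))"
      proof -
        have "norm x < 2 * (norm x + 1)" by (smt (verit) norm_ge_zero)
        then show ?thesis using mult_strict_left_mono t by blast
      qed
      also have "\<dots> = r"
      proof -
        have nz: "2 * (norm x + 1) \<noteq> 0" by (smt (verit) norm_ge_zero)
        then show ?thesis unfolding t_def by simp
      qed
      finally show ?thesis .
    qed
    then have "e + t *\<^sub>R x \<in> K" using r by (auto simp: dist_norm)
    then obtain z1 where z1: "(mat 1 - R) *v z1 = e + t *\<^sub>R x" using key by blast
    have "e \<in> K" using r by auto
    then obtain z2 where z2: "(mat 1 - R) *v z2 = e" using key by blast
    have "(mat 1 - R) *v ((1/t) *\<^sub>R (z1 - z2)) = (1/t) *\<^sub>R ((mat 1 - R) *v z1 - (mat 1 - R) *v z2)"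
      by (simp only: matrix_vector_mult_scaleR matrix_vector_mult_diff_distrib)
    also have "\<dots> = (1/t) *\<^sub>R (t *\<^sub>R x)" by (simp add: z1 z2)
    also have "\<dots> = x" using t by simp
    finally have "(mat 1 - R) *v ((1/t) *\<^sub>R (z1 - z2)) = x" .
    then show ?thesis by blast
  qed
  have "surj (\<lambda>x. (mat 1 - R) *v x)"
    unfolding surj_def
  proof
    fix y
    obtain w where "(mat 1 - R) *v w = y" using surj by blast
    then show "\<exists>x. y = (mat 1 - R) *v x" by auto
  qed
  then have "\<exists>B. (mat 1 - R) ** B = mat 1"
    using matrix_right_invertible_surjective by blast
  then have inv: "invertible (mat 1 - R)" using invertible_right_inverse by blast
  have "K_nonneg K (matrix_inv (mat 1 - R))"
    unfolding K_nonneg_def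
  proof
    fix y assume "y \<in> K"
    then obtain z where z: "z \<in> K" "(mat 1 - R) *v z = y" using key by blast
    have "matrix_inv (mat 1 - R) *v y = (matrix_inv (mat 1 - R) ** (mat 1 - R)) *v z"
      using z(2) matrix_vector_mul_assoc[of "matrix_inv (mat 1 - R)" "mat 1 - R" z] by simp
    also have "\<dots> = z" by (simp add: minv_props(2)[OF inv])
    finally show "matrix_inv (mat 1 - R) *v y \<in> K" using z(1) by simp
  qed
  then show ?thesis using inv by blast
qed


theorem theorem3p7:
  fixes K :: "(real^'n) set" and A U V F G :: "real^'n^'n" and s :: nat
  assumes "proper_cone K"
    and "K_monotone K A"
    and "K_regular_splitting K A U V"
    and "K_weak_regular_splitting_II K U F G"
    and "V ** matrix_inv F ** G = G ** matrix_inv F ** V"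
    and "s \<ge> 1"
    and "K_nonneg K (G - G ** matrix_inv F ** G)"
  shows "let Ps = matrix_inv (\<Sum>j<s. matpow (matrix_inv F ** G) j ** matrix_inv F);
             Ts = matpow (G ** matrix_inv F) s
                  + (\<Sum>j<s. matpow (G ** matrix_inv F) j ** V ** matrix_inv F)
         in K_regular_splitting K A Ps (Ts ** Ps)"
proof -
  note pc = assms(1)
  have AUV: "A = U - V" and invU: "invertible U" and UiK: "K_nonneg K (matrix_inv U)"
    and VK: "K_nonneg K V"
    using assms(3) unfolding K_regular_splitting_def by auto
  have UFG: "U = F - G" and invF: "invertible F" and FiK: "K_nonneg K (matrix_inv F)"
    and QK: "K_nonneg K (G ** matrix_inv F)"
    using assms(4) unfolding K_weak_regular_splitting_II_def by auto
  define Fi where "Fi = matrix_inv F"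
  define Ui where "Ui = matrix_inv U"
  define Q where "Q = G ** Fi"
  define R where "R = matpow Q s"
  define msum where "msum = (\<lambda>m. \<Sum>j<m. matpow Q j)"
  define W where "W = msum s"
  define S where "S = (\<Sum>j<s. matpow (Fi ** G) j ** Fi)"
  define T where "T = matpow Q s + (\<Sum>j<s. matpow Q j ** V ** Fi)"
  define D where "D = G - G ** Fi ** G"
  have FiK': "K_nonneg K Fi" using FiK Fi_def by simp
  have UiK': "K_nonneg K Ui" using UiK Ui_def by simp
  have QK': "K_nonneg K Q" using QK Q_def Fi_def by simp
  have DK: "K_nonneg K D" using assms(7) D_def Fi_def by simp
  have FFi: "F ** Fi = mat 1" "Fi ** F = mat 1" using minv_props[OF invF] Fi_def by auto
  have UUi: "U ** Ui = mat 1" "Ui ** U = mat 1" using minv_props[OF invU] Ui_def by auto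
  have QF: "Q ** F = G" unfolding Q_def by (simp add: matrix_mul_assoc[symmetric] FFi)
  have UFi: "U ** Fi = mat 1 - Q" unfolding UFG Q_def by (simp add: mm_rsub FFi)
  have UiIQ: "Ui ** (mat 1 - Q) = Fi"
  proof -
    have "Ui ** (mat 1 - Q) = Ui ** (U ** Fi)" by (simp add: UFi)
    also have "\<dots> = Fi" by (simp add: matrix_mul_assoc UUi)
    finally show ?thesis .
  qed
  have tele: "(mat 1 - Q) ** msum m = mat 1 - matpow Q m" for m
  proof (induction m)
    case 0 then show ?case by (simp add: msum_def)
  next
    case (Suc m)
    have "msum (Suc m) = msum m + matpow Q m" by (simp add: msum_def)
    then have "(mat 1 - Q) ** msum (Suc m) = (mat 1 - Q) ** msum m + (mat 1 - Q) ** matpow Q m"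
      by (simp add: mm_ladd)
    also have "\<dots> = mat 1 - matpow Q m + (matpow Q m - Q ** matpow Q m)"
      using Suc.IH mm_rsub[of "mat 1" Q "matpow Q m"] by simp
    also have "\<dots> = mat 1 - matpow Q (Suc m)" by simp
    finally show ?case .
  qed
  have FiQ: "Fi ** matpow Q j = matpow (Fi ** G) j ** Fi" for j
  proof (induction j)
    case 0 then show ?case by simp
  next
    case (Suc j)
    have "Fi ** matpow Q (Suc j) = Fi ** G ** (Fi ** matpow Q j)"
      by (simp add: Q_def matrix_mul_assoc)
    also have "\<dots> = Fi ** G ** (matpow (Fi ** G) j ** Fi)" by (simp add: Suc)
    also have "\<dots> = matpow (Fi ** G) (Suc j) ** Fi" by (simp add: matrix_mul_assoc)
    finally show ?case .
  qed
  have SFW: "S = Fi ** W"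
    unfolding S_def W_def msum_def by (simp add: mm_lsum FiQ)
  have SUR: "S = Ui ** (mat 1 - R)"
  proof -
    have "S = Ui ** (mat 1 - Q) ** W" by (simp add: SFW UiIQ)
    also have "\<dots> = Ui ** (mat 1 - R)" by (simp add: matrix_mul_assoc[symmetric] W_def tele R_def)
    finally show ?thesis .
  qed
  have RK: "K_nonneg K R" unfolding R_def by (rule Kn_pow[OF QK'])
  obtain a where a: "\<forall>c\<in>K. norm c \<le> a \<bullet> c" using pc_functional[OF pc] by blast
  obtain C where C: "C > 0" "\<And>x. norm (F *v x) \<le> norm x * C"
    using bounded_linear.pos_bounded[OF matrix_vector_mul_bounded_linear[of F]] by blast
  have summ: "summable (\<lambda>k. norm (matpow R k *v y))" if y: "y \<in> K" for y
  proof -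
    define g where "g = (\<lambda>j. norm (Fi *v (matpow Q j *v y)))"
    have gK: "Fi *v (matpow Q j *v y) \<in> K" for j
      using Kn_mult[OF FiK' Kn_pow[OF QK']] y unfolding K_nonneg_def
      by (simp add: matrix_vector_mul_assoc)
    have b1: "sum g {..<m} \<le> a \<bullet> (Ui *v y)" for m
    proof -
      have "sum g {..<m} \<le> (\<Sum>j<m. a \<bullet> (Fi *v (matpow Q j *v y)))"
        unfolding g_def by (rule sum_mono) (use a gK in blast)
      also have "\<dots> = a \<bullet> (\<Sum>j<m. Fi *v (matpow Q j *v y))" by (simp add: inner_sum_right)
      also have "(\<Sum>j<m. Fi *v (matpow Q j *v y)) = (Fi ** msum m) *v y"
        by (simp add: msum_def mm_lsum mv_sum matrix_vector_mul_assoc)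
      also have "Fi ** msum m = Ui ** (mat 1 - Q) ** msum m" by (simp add: UiIQ)
      also have "\<dots> = Ui ** ((mat 1 - Q) ** msum m)" by (rule matrix_mul_assoc[symmetric])
      also have "\<dots> = Ui ** (mat 1 - matpow Q m)" by (simp only: tele)
      also have "\<dots> = Ui - Ui ** matpow Q m" by (simp add: mm_lsub)
      also have "(Ui - Ui ** matpow Q m) *v y = Ui *v y - (Ui ** matpow Q m) *v y"
        by (simp add: matrix_vector_mult_diff_rdistrib)
      also have "a \<bullet> (Ui *v y - (Ui ** matpow Q m) *v y) = a \<bullet> (Ui *v y) - a \<bullet> ((Ui ** matpow Q m) *v y)"
        by (simp add: inner_diff_right)
      also have "\<dots> \<le> a \<bullet> (Ui *v y)"
      proof -
        have "(Ui ** matpow Q m) *v y \<in> K"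
          using Kn_mult[OF UiK' Kn_pow[OF QK']] y unfolding K_nonneg_def by blast
        then have "norm ((Ui ** matpow Q m) *v y) \<le> a \<bullet> ((Ui ** matpow Q m) *v y)" using a by blast
        then show ?thesis using norm_ge_zero[of "(Ui ** matpow Q m) *v y"] by linarith
      qed
      finally show ?thesis .
    qed
    have gnn: "g j \<ge> 0" for j unfolding g_def by simp
    have b2: "(\<Sum>k<N. g (s * k)) \<le> a \<bullet> (Ui *v y)" for N
    proof -
      have inj: "inj_on (\<lambda>k. s * k) {..<N}" using assms(6) by (auto simp: inj_on_def)
      have "(\<Sum>k<N. g (s * k)) = sum g ((\<lambda>k. s * k) ` {..<N})"
        by (simp add: sum.reindex[OF inj])
      also have "\<dots> \<le> sum g {..<s * N}"
      proof (rule sum_mono2)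
        show "(\<lambda>k. s * k) ` {..<N} \<subseteq> {..<s * N}" using assms(6) by auto
      qed (use gnn in auto)
      also have "\<dots> \<le> a \<bullet> (Ui *v y)" by (rule b1)
      finally show ?thesis .
    qed
    have b3: "norm (matpow R k *v y) \<le> C * g (s * k)" for k
    proof -
      have "matpow R k *v y = F *v (Fi *v (matpow Q (s * k) *v y))"
        by (simp add: R_def matpow_mult matrix_vector_mul_assoc matrix_mul_assoc FFi)
      then have "norm (matpow R k *v y) \<le> norm (Fi *v (matpow Q (s * k) *v y)) * C"
        using C(2) by simp
      then show ?thesis unfolding g_def by (simp add: mult.commute)
    qed
    show ?thesis
    proof (rule bounded_imp_summable)
      show "0 \<le> norm (matpow R n *v y)" for n by simp
      show "(\<Sum>k\<le>n. norm (matpow R k *v y)) \<le> C * (a \<bullet> (Ui *v y))" for n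
      proof -
        have "(\<Sum>k\<le>n. norm (matpow R k *v y)) \<le> (\<Sum>k\<le>n. C * g (s * k))"
          by (rule sum_mono) (rule b3)
        also have "\<dots> = C * (\<Sum>k<Suc n. g (s * k))"
          by (simp add: sum_distrib_left lessThan_Suc_atMost)
        also have "\<dots> \<le> C * (a \<bullet> (Ui *v y))"
          using b2[of "Suc n"] C(1) by (simp add: mult_left_mono)
        finally show ?thesis .
      qed
    qed
  qed
  have NR: "invertible (mat 1 - R) \<and> K_nonneg K (matrix_inv (mat 1 - R))"
    by (rule neumann[OF pc RK summ])
  define N where "N = matrix_inv (mat 1 - R)"
  have invIR: "invertible (mat 1 - R)" and NK: "K_nonneg K N" using NR N_def by auto
  have NIR: "N ** (mat 1 - R) = mat 1" "(mat 1 - R) ** N = mat 1"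
    using minv_props[OF invIR] N_def by auto
  have SPs: "S ** (N ** U) = mat 1"
  proof -
    have "S ** (N ** U) = Ui ** ((mat 1 - R) ** N) ** U" by (simp add: SUR matrix_mul_assoc)
    also have "\<dots> = mat 1" by (simp add: NIR UUi)
    finally show ?thesis .
  qed
  have PsS: "(N ** U) ** S = mat 1"
  proof -
    have "(N ** U) ** S = N ** (U ** Ui) ** (mat 1 - R)" by (simp add: SUR matrix_mul_assoc)
    also have "\<dots> = mat 1" by (simp add: NIR UUi)
    finally show ?thesis .
  qed
  have Ps: "matrix_inv S = N ** U" using minv_unique(1)[OF SPs] .
  have invPs: "invertible (N ** U)" using minv_unique(2)[OF PsS] .
  have PsInv: "matrix_inv (N ** U) = S" using minv_unique(1)[OF PsS] .
  have SK: "K_nonneg K S"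
    unfolding S_def by (rule Kn_sum[OF pc]) (simp add: FiQ[symmetric] Kn_mult[OF FiK' Kn_pow[OF QK']])
  have VQ: "Q ** (V ** Fi) = (V ** Fi) ** Q"
  proof -
    have "(V ** Fi) ** Q = (V ** Fi ** G) ** Fi" by (simp add: Q_def matrix_mul_assoc)
    also have "\<dots> = (G ** Fi ** V) ** Fi" using assms(5) Fi_def by simp
    also have "\<dots> = Q ** (V ** Fi)" by (simp add: Q_def matrix_mul_assoc)
    finally show ?thesis by simp
  qed
  have sumV: "(\<Sum>j<s. matpow Q j ** V ** Fi) = V ** Fi ** W"
  proof -
    have "matpow Q j ** V ** Fi = V ** Fi ** matpow Q j" for j
      using matpow_comm_gen[OF VQ, of j] by (simp add: matrix_mul_assoc)
    then show ?thesis by (simp add: W_def msum_def mm_lsum)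
  qed
  have IRQ: "(mat 1 - R) ** Q = Q ** (mat 1 - R)"
    by (simp add: mm_rsub mm_lsub R_def matpow_comm)
  have NQ: "N ** Q = Q ** N" unfolding N_def by (rule comm_inv[OF invIR IRQ])
  have QN: "Q ** N = N ** Q" using NQ by simp
  have NW: "W ** N = N ** W"
  proof -
    have "matpow Q j ** N = N ** matpow Q j" for j by (rule matpow_comm_gen[OF QN])
    then show ?thesis by (simp add: W_def msum_def mm_lsum mm_rsum)
  qed
  have NRc: "R ** N = N ** R" unfolding R_def by (rule matpow_comm_gen[OF QN])
  have QW: "Q ** W = W ** Q"
    by (simp add: W_def msum_def mm_lsum mm_rsum matpow_comm)
  have WIQ: "W ** (mat 1 - Q) = mat 1 - R"
  proof -
    have "W ** (mat 1 - Q) = W - W ** Q" by (simp add: mm_lsub)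
    also have "\<dots> = W - Q ** W" by (simp add: QW)
    also have "\<dots> = (mat 1 - Q) ** W" by (simp add: mm_rsub)
    also have "\<dots> = mat 1 - R" by (simp add: W_def tele R_def)
    finally show ?thesis .
  qed
  have UIQF: "U = (mat 1 - Q) ** F" by (simp add: mm_rsub QF UFG)
  have T2: "V ** Fi ** W ** (N ** U) = V"
  proof -
    have "W ** (N ** U) = N ** (W ** (mat 1 - Q)) ** F"
      by (simp add: matrix_mul_assoc NW UIQF)
    also have "\<dots> = F" by (simp add: WIQ NIR)
    finally have "W ** (N ** U) = F" .
    then have "V ** Fi ** W ** (N ** U) = V ** Fi ** F" by (simp add: matrix_mul_assoc[symmetric])
    also have "\<dots> = V" by (simp add: matrix_mul_assoc[symmetric] FFi)
    finally show ?thesis .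
  qed
  define X1 where "X1 = N ** matpow Q (s - 1) ** D"
  have Rsplit: "R = matpow Q (s - 1) ** Q"
  proof -
    have "R = matpow Q ((s - 1) + 1)" using assms(6) R_def by simp
    also have "\<dots> = matpow Q (s - 1) ** Q" by (simp add: matpow_add matpow_comm)
    finally show ?thesis .
  qed
  have RU: "R ** U = matpow Q (s - 1) ** D"
  proof -
    have "R ** U = matpow Q (s - 1) ** (Q ** U)" by (simp add: Rsplit matrix_mul_assoc)
    also have "Q ** U = Q ** F - Q ** G" by (simp add: UFG mm_lsub)
    also have "\<dots> = D" unfolding QF D_def by (simp add: Q_def)
    finally show ?thesis .
  qed
  have T1: "R ** (N ** U) = X1"
  proof -
    have "R ** (N ** U) = N ** (R ** U)" by (simp add: matrix_mul_assoc NRc)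
    also have "\<dots> = X1" by (simp add: RU X1_def matrix_mul_assoc)
    finally show ?thesis .
  qed
  have TPs: "T ** (N ** U) = X1 + V"
  proof -
    have "T = R + V ** Fi ** W" by (simp add: T_def R_def sumV)
    then have "T ** (N ** U) = R ** (N ** U) + V ** Fi ** W ** (N ** U)" by (simp add: mm_radd)
    then show ?thesis by (simp add: T1 T2)
  qed
  have X1K: "K_nonneg K X1" unfolding X1_def by (intro Kn_mult NK Kn_pow QK' DK)
  have TPsK: "K_nonneg K (T ** (N ** U))" unfolding TPs by (rule Kn_add[OF pc X1K VK])
  have Aeq: "A = N ** U - T ** (N ** U)"
  proof -
    have "N ** U - X1 = N ** U - N ** (R ** U)" by (simp add: RU X1_def matrix_mul_assoc)
    also have "\<dots> = N ** ((mat 1 - R) ** U)" by (simp add: mm_lsub mm_rsub)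
    also have "\<dots> = U" by (simp add: matrix_mul_assoc NIR)
    finally have "N ** U - X1 = U" .
    then show ?thesis unfolding TPs AUV by (simp add: algebra_simps)
  qed
  have main: "K_regular_splitting K A (matrix_inv S) (T ** matrix_inv S)"
    unfolding K_regular_splitting_def Ps PsInv using Aeq invPs SK TPsK by blast
  show ?thesis unfolding Let_def using main by (simp add: S_def T_def Q_def Fi_def)
qed

end
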